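(* Let $p$ be a prime and $n$ a positive integer with $p^n\equiv 2 \pmod 3$, let $d=\frac{2p^n-1}{3}$ and $F(x)=x^d$ on $\mathrm{GF}(p^n)$. For every $c\in\mathrm{GF}(p^n)$ with $c\neq1$, ${}_c\Delta_F\le 3$.
   Context: For a function $F:\mathrm{GF}(p^n)\to\mathrm{GF}(p^n)$ and $a,b,c\in\mathrm{GF}(p^n)$, let ${}_c\Delta_F(a,b)=\#\{x\in\mathrm{GF}(p^n): F(x+a)-cF(x)=b\}$. The $c$-differential uniformity of $F$ is ${}_c\Delta_F=\max\{{}_c\Delta_F(a,b): a,b\in\mathrm{GF}(p^n),\ \text{and } a\neq 0 \text{ if } c=1\}$. *)

theory Defs
  imports "HOL-Computational_Algebra.Primes" "HOL-Library.Cardinality"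
begin

definition c_delta :: "('a::field \<Rightarrow> 'a) \<Rightarrow> 'a \<Rightarrow> 'a \<Rightarrow> 'a \<Rightarrow> nat" where
  "c_delta F c a b = card {x. F (x + a) - c * F x = b}"

definition c_diff_uniformity :: "('a::field \<Rightarrow> 'a) \<Rightarrow> 'a \<Rightarrow> nat" where
  "c_diff_uniformity F c = Max {c_delta F c a b | a b. c = 1 \<longrightarrow> a \<noteq> 0}"

end

theory Submission
  imports Defs "HOL-Computational_Algebra.Polynomial"
begin

lemma fermat_field:
  fixes x :: "'a::{field,finite}"
  assumes "x \<noteq> 0"
  shows "x ^ (CARD('a) - 1) = 1"
proof -
  let ?S = "UNIV - {0::'a}"
  have fin: "finite ?S" by simp
  have bij: "bij_betw (\<lambda>y. x * y) ?S ?S"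
    unfolding bij_betw_def inj_on_def
  proof (intro conjI ballI impI)
    show "(\<lambda>y. x * y) ` ?S = ?S"
    proof
      show "(\<lambda>y. x * y) ` ?S \<subseteq> ?S" using assms by auto
      show "?S \<subseteq> (\<lambda>y. x * y) ` ?S"
      proof
        fix z assume "z \<in> ?S"
        then have "z = x * (z / x)" "z / x \<in> ?S" using assms by auto
        then show "z \<in> (\<lambda>y. x * y) ` ?S" by blast
      qed
    qed
  qed (use assms in auto)
  have "prod (\<lambda>y. x * y) ?S = prod id ?S"
    using prod.reindex_bij_betw[OF bij, of id] by simp
  moreover have "prod (\<lambda>y. x * y) ?S = x ^ card ?S * prod id ?S"
    by (simp add: prod.distrib)
  moreover have "prod id ?S \<noteq> 0" by simp
  moreover have "card ?S = CARD('a) - 1"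
    by (simp add: card_Diff_singleton)
  ultimately show ?thesis by auto
qed

theorem theorem5:
  fixes p n :: nat and c :: "'a::{field,finite}"
  assumes "prime p" and "n > 0"
    and "CARD('a) = p ^ n"
    and "p ^ n mod 3 = 2"
    and "c \<noteq> 1"
  shows "c_diff_uniformity (\<lambda>x::'a. x ^ ((2 * p ^ n - 1) div 3)) c \<le> 3"
proof -
  define q where "q = p ^ n"
  define d where "d = (2 * p ^ n - 1) div 3"
  define F where "F = (\<lambda>x::'a. x ^ d)"
  have q3: "q mod 3 = 2" using assms(4) q_def by simp
  have d3: "3 * d = 2 * (q - 1) + 1" unfolding d_def q_def[symmetric] using q3 by presburger
  have cube: "(y ^ 3) ^ d = y" for y :: 'a
  proof (cases "y = 0")
    case True then show ?thesis using d3 by (simp add: zero_power)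
  next
    case False
    have "(y ^ 3) ^ d = y ^ (3 * d)" by (simp add: power_mult)
    also have "\<dots> = (y ^ (q - 1)) ^ 2 * y" using d3 by (simp add: power_add power_mult mult.commute[of 2])
    also have "\<dots> = y" using fermat_field[OF False] assms(3) q_def by simp
    finally show ?thesis .
  qed
  have cube2: "(y ^ d) ^ 3 = y" for y :: 'a
  proof -
    have "(y ^ d) ^ 3 = (y ^ 3) ^ d" by (simp add: power_mult[symmetric] mult.commute)
    then show ?thesis using cube by simp
  qed
  have Feq: "F u = v \<longleftrightarrow> u = v ^ 3" for u v
    unfolding F_def using cube cube2 by metis
  have c3: "c ^ 3 \<noteq> 1"
  proof
    assume "c ^ 3 = 1"
    then have "(c ^ 3) ^ d = 1" by simp
    then show False using cube assms(5) by simp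
  qed
  have bound: "c_delta F c a b \<le> 3" for a b
  proof -
    define P where "P = [:b ^ 3 - a, 3 * b ^ 2 * c, 3 * b * c ^ 2, c ^ 3 - 1:]"
    have polyP: "poly P y = (b + c * y) ^ 3 - y ^ 3 - a" for y
      unfolding P_def by (simp add: algebra_simps power2_eq_square power3_eq_cube)
    have degP: "degree P = 3" unfolding P_def using c3 by simp
    have P0: "P \<noteq> 0" using degP by auto
    have inj: "inj F" unfolding inj_def using Feq by metis
    have img: "F ` {x. F (x + a) - c * F x = b} = {y. poly P y = 0}"
    proof (intro equalityI subsetI)
      fix y assume "y \<in> F ` {x. F (x + a) - c * F x = b}"
      then obtain x where x: "F (x + a) - c * F x = b" "y = F x" by auto
      then have "x = y ^ 3" using Feq by metis
      moreover have "F (x + a) = b + c * y" using x by (simp add: algebra_simps)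
      ultimately have "y ^ 3 + a = (b + c * y) ^ 3" using Feq by simp
      then have "(b + c * y) ^ 3 = y ^ 3 + a" by (rule sym)
      then have "(b + c * y) ^ 3 - y ^ 3 - a = 0" by (simp only: diff_diff_eq eq_iff_diff_eq_0[symmetric])
      then show "y \<in> {y. poly P y = 0}" using polyP[of y] by simp
    next
      fix y assume "y \<in> {y. poly P y = 0}"
      then have "(b + c * y) ^ 3 - y ^ 3 - a = 0" using polyP[of y] by simp
      then have "(b + c * y) ^ 3 = y ^ 3 + a" by (simp only: diff_diff_eq eq_iff_diff_eq_0[symmetric])
      then have "y ^ 3 + a = (b + c * y) ^ 3" by (rule sym)
      then have "F (y ^ 3 + a) = b + c * y" using Feq by simp
      moreover have "F (y ^ 3) = y" using Feq by simp
      ultimately have "F (y ^ 3 + a) - c * F (y ^ 3) = b" by simp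
      then show "y \<in> F ` {x. F (x + a) - c * F x = b}"
        using \<open>F (y ^ 3) = y\<close> by (metis (mono_tags, lifting) image_eqI mem_Collect_eq)
    qed
    have "c_delta F c a b = card (F ` {x. F (x + a) - c * F x = b})"
      unfolding c_delta_def using inj by (simp add: card_image inj_on_subset)
    also have "\<dots> \<le> 3" using img card_poly_roots_bound[OF P0] degP by simp
    finally show ?thesis .
  qed
  let ?A = "{c_delta F c a b | a b. c = 1 \<longrightarrow> a \<noteq> 0}"
  have fin: "finite ?A"
  proof -
    have "?A \<subseteq> (\<lambda>(a,b). c_delta F c a b) ` UNIV" by auto
    then show ?thesis by (rule finite_subset) simp
  qed
  have "c_delta F c 1 0 \<in> ?A"
    by (rule CollectI, rule exI[of _ 1], rule exI[of _ 0]) simp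
  then have ne: "?A \<noteq> {}" by blast
  have "Max ?A \<le> 3" using fin ne bound by (subst Max_le_iff) auto
  then show ?thesis unfolding c_diff_uniformity_def F_def d_def by simp
qed

end
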